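(* Assume the setting described in the context. Let $\hat{\mathcal{D}}=\{\Delta\in\mathcal{D}:\Delta_j\in\{\Delta_j^-,\Delta_j^+\}\ \text{for all } j\}$ be the set of the $2^m$ vertices of $\mathcal{D}$, enumerated as $\Delta^{(1)},\dots,\Delta^{(2^m)}$, and let $p_i(\kappa)=\det[-(B\Delta^{(i)}C+\kappa^2J_2+\kappa^4J_4)]$. Then for all $\kappa\ge0$, $\Psi^-(\kappa)=\min_i p_i(\kappa)$ and $\Psi^+(\kappa)=\max_i p_i(\kappa)$. Moreover, $\Psi^-$ and $\Psi^+$ are piecewise polynomial: there exist finitely many values $\kappa_1<\kappa_2<\dots<\kappa_M$ such that $\Psi^-$ (and analogously $\Psi^+$) coincides with a polynomial on each interval $[\kappa_h,\kappa_{h+1}]$ (and on the unbounded end intervals); in particular they are piecewise differentiable.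
   Context: Let $n,m\ge 1$, $B\in\mathbb{Z}^{n\times m}$, $C\in\mathbb{Z}^{m\times n}$, and $J_2,J_4\in\mathbb{R}^{n\times n}$ symmetric. Given bounds $0\le \Delta_j^-\le \Delta_j^+<\infty$ ($j=1,\dots,m$), $\mathcal{D}$ is the set of diagonal matrices $\Delta=\mathrm{diag}(\Delta_1,\dots,\Delta_m)$ with $\Delta_j^-\le\Delta_j\le\Delta_j^+$. For real $\kappa\ge0$, $\Psi^-(\kappa)=\min_{\Delta\in\mathcal{D}}\det[-(B\Delta C+\kappa^2J_2+\kappa^4J_4)]$ and $\Psi^+(\kappa)=\max_{\Delta\in\mathcal{D}}\det[-(B\Delta C+\kappa^2J_2+\kappa^4J_4)]$. *)

theory Defs
  imports "HOL-Analysis.Analysis" "HOL-Computational_Algebra.Polynomial"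
begin

definition real_mat :: "int^'c^'r \<Rightarrow> real^'c^'r" where
  "real_mat A = (\<chi> i j. real_of_int (A $ i $ j))"

definition diag_mat :: "('m::finite \<Rightarrow> real) \<Rightarrow> real^'m^'m" where
  "diag_mat d = (\<chi> i j. if i = j then d i else 0)"

definition charfun :: "int^'m^'n \<Rightarrow> int^'n^'m \<Rightarrow> real^'n^'n \<Rightarrow> real^'n^'n
    \<Rightarrow> ('m::finite \<Rightarrow> real) \<Rightarrow> real \<Rightarrow> real" where
  "charfun B C J2 J4 d \<kappa> =
     det (- (real_mat B ** diag_mat d ** real_mat C + (\<kappa>^2) *\<^sub>R J2 + (\<kappa>^4) *\<^sub>R J4))"

text \<open>The box D of admissible diagonal matrices (identified with their diagonals).\<close>
definition box_D :: "('m \<Rightarrow> real) \<Rightarrow> ('m \<Rightarrow> real) \<Rightarrow> ('m \<Rightarrow> real) set" where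
  "box_D lo hi = {d. \<forall>j. lo j \<le> d j \<and> d j \<le> hi j}"

definition vertices_D :: "('m \<Rightarrow> real) \<Rightarrow> ('m \<Rightarrow> real) \<Rightarrow> ('m \<Rightarrow> real) set" where
  "vertices_D lo hi = {d. \<forall>j. d j = lo j \<or> d j = hi j}"

definition Psi_minus where
  "Psi_minus B C J2 J4 lo hi \<kappa> = (INF d\<in>box_D lo hi. charfun B C J2 J4 d \<kappa>)"

definition Psi_plus where
  "Psi_plus B C J2 J4 lo hi \<kappa> = (SUP d\<in>box_D lo hi. charfun B C J2 J4 d \<kappa>)"

definition pieces :: "real list \<Rightarrow> real set set" where
  "pieces ks = (if ks = [] then {{0..}} else
     {{0..hd ks}} \<union> {{ks ! h .. ks ! Suc h} | h. Suc h < length ks} \<union> {{last ks..}})"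

definition piecewise_polynomial :: "(real \<Rightarrow> real) \<Rightarrow> bool" where
  "piecewise_polynomial f \<longleftrightarrow>
     (\<exists>ks. sorted_wrt (<) ks \<and> (\<forall>k\<in>set ks. 0 \<le> k) \<and>
        (\<forall>I\<in>pieces ks. \<exists>q :: real poly. \<forall>\<kappa>\<in>I. f \<kappa> = poly q \<kappa>))"

end

theory Submission
  imports Defs
begin


definition rk1 :: "real^'n^'n \<Rightarrow> ('n::finite \<Rightarrow> real) \<Rightarrow> real^'n \<Rightarrow> 'n set \<Rightarrow> real \<Rightarrow> real^'n^'n" where
  "rk1 A u v S t = (\<chi> i. if i \<in> S then A$i + (t * u i) *s v else A$i)"

lemma rk1_Q:
  fixes A :: "real^'n::finite^'n"
  assumes "finite S" "k \<notin> S" "A$k = v"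
  shows "det (rk1 A u v S t) = det A"
  using assms
proof (induction S rule: finite_induct)
  case empty
  then show ?case by (simp add: rk1_def vec_eq_iff)
next
  case (insert l S)
  let ?M = "rk1 A u v S t"
  have lk: "l \<noteq> k" using insert by auto
  have "rk1 A u v (insert l S) t = (\<chi> i. if i = l then row l ?M + (t * u l) *s row k ?M else row i ?M)"
    using insert lk by (auto simp: rk1_def vec_eq_iff row_def)
  then have "det (rk1 A u v (insert l S) t) = det ?M"
    using det_row_operation[OF lk, of ?M "t * u l"] by simp
  then show ?case using insert by simp
qed

lemma rk1_P:
  fixes A :: "real^'n::finite^'n"
  assumes "finite S"
  shows "\<exists>c. \<forall>t. det (rk1 A u v S t) = det A + t * c"
  using assms
proof (induction S rule: finite_induct)
  case empty
  then show ?case by (auto simp: rk1_def vec_eq_iff intro: exI[of _ 0])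
next
  case (insert k S)
  then obtain c where c: "\<forall>t. det (rk1 A u v S t) = det A + t * c" by blast
  define A' where "A' = (\<chi> i. if i = k then v else A$i)"
  have "det (rk1 A u v (insert k S) t) = det A + t * (c + u k * det A')" for t
  proof -
    have e1: "rk1 A u v (insert k S) t = (\<chi> i. if i = k then A$i + (t * u i) *s v else rk1 A u v S t $ i)"
      using insert by (auto simp: rk1_def vec_eq_iff)
    have e2: "(\<chi> i. if i = k then A$i else rk1 A u v S t $ i) = rk1 A u v S t"
      using insert by (auto simp: rk1_def vec_eq_iff)
    have e3: "(\<chi> i. if i = k then (t * u k) *s v else rk1 A u v S t $ i)
        = (\<chi> i. if i = k then (t * u k) *s v else rk1 A u v S t $ i)" by simp
    have e4: "(\<chi> i. if i = k then v else rk1 A u v S t $ i) = rk1 A' u v S t"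
      using insert by (auto simp: rk1_def vec_eq_iff A'_def)
    have "det (rk1 A u v (insert k S) t) = det (rk1 A u v S t)
          + det (\<chi> i. if i = k then (t * u i) *s v else rk1 A u v S t $ i)"
      unfolding e1 det_row_add e2 ..
    also have "(\<chi> i. if i = k then (t * u i) *s v else rk1 A u v S t $ i)
        = (\<chi> i. if i = k then (t * u k) *s v else rk1 A u v S t $ i)"
      by (auto simp: vec_eq_iff)
    also have "det \<dots> = (t * u k) * det (\<chi> i. if i = k then v else rk1 A u v S t $ i)"
      using det_row_mul[of k "t * u k" "\<lambda>i. v" "\<lambda>i. rk1 A u v S t $ i"] by simp
    also have "\<dots> = (t * u k) * det A'"
      unfolding e4 using rk1_Q[OF insert(1), of k A' v u t] insert(2) by (simp add: A'_def)
    finally show ?thesis using c by (simp add: algebra_simps)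
  qed
  then show ?case by blast
qed

lemma det_rank_one_affine:
  fixes A :: "real^'n::finite^'n"
  shows "\<exists>c. \<forall>t. det (\<chi> i j. A$i$j + t * (u i * v$j)) = det A + t * c"
proof -
  have "(\<chi> i j. A$i$j + t * (u i * v$j)) = rk1 A u v UNIV t" for t
    by (simp add: rk1_def vec_eq_iff)
  then show ?thesis using rk1_P[of UNIV A u v] by simp
qed



lemma mult_diag_entry:
  fixes X :: "real^'m::finite^'n" and Y :: "real^'k^'m"
  shows "(X ** diag_mat e ** Y)$i$k = (\<Sum>l\<in>UNIV. X$i$l * e l * Y$l$k)"
proof -
  have "(X ** diag_mat e)$i$l = X$i$l * e l" for l
    by (simp add: matrix_matrix_mult_def diag_mat_def if_distrib cong: if_cong)
  then show ?thesis by (simp add: matrix_matrix_mult_def)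
qed

lemma charfun_affine:
  "\<exists>a b. \<forall>t. charfun B C J2 J4 (d(j:=t)) \<kappa> = a + t * b"
proof -
  let ?K = "(\<kappa>^2) *\<^sub>R J2 + (\<kappa>^4) *\<^sub>R J4"
  define A where "A = - (real_mat B ** diag_mat (d(j:=0)) ** real_mat C + ?K)"
  define u where "u = (\<lambda>i. - real_of_int (B$i$j))"
  define v where "v = (\<chi> k. real_of_int (C$j$k))"
  have eq: "- (real_mat B ** diag_mat (d(j:=t)) ** real_mat C + (\<kappa>^2) *\<^sub>R J2 + (\<kappa>^4) *\<^sub>R J4) = (\<chi> i k. A$i$k + t * (u i * v$k))" for t
  proof -
    have s: "(\<Sum>l\<in>UNIV. real_mat B$i$l * (d(j:=t)) l * real_mat C$l$k)
      = (\<Sum>l\<in>UNIV. real_mat B$i$l * (d(j:=0)) l * real_mat C$l$k) + t * (real_mat B$i$j * real_mat C$j$k)"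
      for i k
    proof -
      have "(\<Sum>l\<in>UNIV. real_mat B$i$l * (d(j:=t)) l * real_mat C$l$k)
        = (\<Sum>l\<in>UNIV. real_mat B$i$l * (d(j:=0)) l * real_mat C$l$k
             + (if l = j then t * (real_mat B$i$j * real_mat C$j$k) else 0))"
        by (rule sum.cong) auto
      then show ?thesis by (simp add: sum.distrib)
    qed
    show ?thesis
    proof (simp only: vec_eq_iff, intro allI)
      fix i k
      have "(- (real_mat B ** diag_mat (d(j:=t)) ** real_mat C + (\<kappa>^2) *\<^sub>R J2 + (\<kappa>^4) *\<^sub>R J4))$i$k
        = - ((\<Sum>l\<in>UNIV. real_mat B$i$l * (d(j:=t)) l * real_mat C$l$k) + \<kappa>^2 * J2$i$k + \<kappa>^4 * J4$i$k)"
        by (simp add: mult_diag_entry)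
      also have "\<dots> = - ((\<Sum>l\<in>UNIV. real_mat B$i$l * (d(j:=0)) l * real_mat C$l$k)
           + t * (real_mat B$i$j * real_mat C$j$k) + \<kappa>^2 * J2$i$k + \<kappa>^4 * J4$i$k)"
        by (simp only: s)
      also have "\<dots> = (\<chi> i k. A$i$k + t * (u i * v$k))$i$k"
        by (simp add: A_def u_def v_def mult_diag_entry real_mat_def algebra_simps)
      finally show "(- (real_mat B ** diag_mat (d(j:=t)) ** real_mat C + (\<kappa>^2) *\<^sub>R J2 + (\<kappa>^4) *\<^sub>R J4))$i$k = (\<chi> i k. A$i$k + t * (u i * v$k))$i$k" .
    qed
  qed
  have cf: "charfun B C J2 J4 (d(j:=t)) \<kappa> = det (\<chi> i k. A$i$k + t * (u i * v$k))" for t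
    unfolding charfun_def by (rule arg_cong[where f=det], rule eq)
  obtain c where "\<forall>t. det (\<chi> i k. A$i$k + t * (u i * v$k)) = det A + t * c"
    using det_rank_one_affine by blast
  then show ?thesis using cf by auto
qed

lemma det_poly:
  fixes M :: "real \<Rightarrow> real^'n::finite^'n"
  assumes "\<And>i j. \<exists>q. \<forall>x. M x $i$j = poly q x"
  shows "\<exists>Q. \<forall>x. det (M x) = poly Q x"
proof -
  obtain q where q: "\<And>i j x. M x $i$j = poly (q i j) x"
    using assms by metis
  define Q where "Q = (\<Sum>p\<in>{p. p permutes (UNIV::'n set)}. smult (of_int (sign p)) (\<Prod>i\<in>UNIV. q i (p i)))"
  have "det (M x) = poly Q x" for x
    by (simp add: det_def Q_def poly_sum poly_prod q)
  then show ?thesis by blast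
qed

lemma charfun_poly:
  "\<exists>Q. \<forall>\<kappa>. charfun B C J2 J4 d \<kappa> = poly Q \<kappa>"
  unfolding charfun_def
proof (rule det_poly)
  fix i k
  let ?X = "real_mat B ** diag_mat d ** real_mat C"
  have "\<forall>x. (- (?X + (x^2) *\<^sub>R J2 + (x^4) *\<^sub>R J4))$i$k
     = poly ([:-(?X$i$k):] + monom (-(J2$i$k)) 2 + monom (-(J4$i$k)) 4) x"
    by (simp add: poly_monom algebra_simps)
  then show "\<exists>q. \<forall>x. (- (?X + (x^2) *\<^sub>R J2 + (x^4) *\<^sub>R J4))$i$k = poly q x" by blast
qed



lemma vertex_min:
  fixes f :: "('m::finite \<Rightarrow> real) \<Rightarrow> real"
  assumes aff: "\<And>d j. \<exists>a b. \<forall>t. f (d(j:=t)) = a + t * b"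
    and lohi: "\<And>j. lo j \<le> hi j" and d: "d \<in> box_D lo hi"
  shows "\<exists>v\<in>vertices_D lo hi. f v \<le> f d"
proof -
  have "\<forall>d. d \<in> box_D lo hi \<and> {j. d j \<noteq> lo j \<and> d j \<noteq> hi j} \<subseteq> S \<longrightarrow> (\<exists>v\<in>vertices_D lo hi. f v \<le> f d)"
    if "finite S" for S
    using that
  proof (induction S rule: finite_induct)
    case empty
    then show ?case by (auto simp: vertices_D_def)
  next
    case (insert j S)
    show ?case
    proof (intro allI impI)
      fix d assume H: "d \<in> box_D lo hi \<and> {j. d j \<noteq> lo j \<and> d j \<noteq> hi j} \<subseteq> insert j S"
      obtain a b where ab: "\<forall>t. f (d(j:=t)) = a + t * b" using aff by blast
      define t0 where "t0 = (if a + lo j * b \<le> a + hi j * b then lo j else hi j)"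
      have dj: "lo j \<le> d j" "d j \<le> hi j" using H by (auto simp: box_D_def)
      have "t0 * b \<le> d j * b"
      proof (cases "0 \<le> b")
        case True
        then have "lo j * b \<le> d j * b" using dj mult_right_mono by blast
        then show ?thesis unfolding t0_def by auto
      next
        case False
        then have "hi j * b \<le> d j * b" using dj mult_right_mono_neg[of "d j" "hi j" b] by auto
        then show ?thesis unfolding t0_def by auto
      qed
      then have le: "f (d(j:=t0)) \<le> f d" using ab spec[OF ab, of "d j"] by simp
      have t0: "t0 = lo j \<or> t0 = hi j" unfolding t0_def by auto
      have "d(j:=t0) \<in> box_D lo hi" using H t0 lohi[of j] by (auto simp: box_D_def)
      moreover have "{i. (d(j:=t0)) i \<noteq> lo i \<and> (d(j:=t0)) i \<noteq> hi i} \<subseteq> S"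
        using H t0 by auto
      ultimately obtain v where "v \<in> vertices_D lo hi" "f v \<le> f (d(j:=t0))"
        using insert.IH by blast
      then show "\<exists>v\<in>vertices_D lo hi. f v \<le> f d" using le order_trans by blast
    qed
  qed
  from this[of UNIV] d show ?thesis by auto
qed

lemma vertex_max:
  fixes f :: "('m::finite \<Rightarrow> real) \<Rightarrow> real"
  assumes aff: "\<And>d j. \<exists>a b. \<forall>t. f (d(j:=t)) = a + t * b"
    and lohi: "\<And>j. lo j \<le> hi j" and d: "d \<in> box_D lo hi"
  shows "\<exists>v\<in>vertices_D lo hi. f d \<le> f v"
proof -
  have "\<exists>a b. \<forall>t. - f (d(j:=t)) = a + t * b" for d j
  proof -
    obtain a b where "\<forall>t. f (d(j:=t)) = a + t * b" using aff by blast
    then have "\<forall>t. - f (d(j:=t)) = (-a) + t * (-b)" by simp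
    then show ?thesis by blast
  qed
  from vertex_min[of "\<lambda>d. - f d", OF this lohi d] show ?thesis by auto
qed

lemma finite_vertices: "finite (vertices_D lo (hi :: 'm::finite \<Rightarrow> real))"
proof -
  have "vertices_D lo hi = Pi\<^sub>E UNIV (\<lambda>j. {lo j, hi j})"
    by (auto simp: vertices_D_def PiE_UNIV_domain)
  then show ?thesis by (simp add: finite_PiE)
qed

lemma vertices_sub: assumes "\<And>j. lo j \<le> hi j" shows "vertices_D lo hi \<subseteq> box_D lo hi"
proof
  fix d assume "d \<in> vertices_D lo hi"
  then have "d j = lo j \<or> d j = hi j" for j by (simp add: vertices_D_def)
  then have "lo j \<le> d j \<and> d j \<le> hi j" for j using assms[of j] by (metis order_refl)
  then show "d \<in> box_D lo hi" by (simp add: box_D_def)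
qed

lemma lo_vertex: "lo \<in> vertices_D lo hi"
  unfolding vertices_D_def by simp



definition crossZ :: "real poly set \<Rightarrow> real set" where
  "crossZ F = {y. \<exists>p\<in>F. \<exists>q\<in>F. p \<noteq> q \<and> poly p y = poly q y}"

lemma finite_crossZ: assumes "finite F" shows "finite (crossZ F)"
proof -
  have "crossZ F \<subseteq> (\<Union>pq\<in>{pq\<in>F\<times>F. fst pq \<noteq> snd pq}. {y. poly (fst pq - snd pq) y = 0})"
  proof
    fix y assume "y \<in> crossZ F"
    then obtain p q where pq: "p \<in> F" "q \<in> F" "p \<noteq> q" "poly p y = poly q y"
      unfolding crossZ_def by blast
    show "y \<in> (\<Union>pq\<in>{pq\<in>F\<times>F. fst pq \<noteq> snd pq}. {y. poly (fst pq - snd pq) y = 0})"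
      by (rule UN_I[of "(p,q)"]) (use pq in auto)
  qed
  moreover have "finite (\<Union>pq\<in>{pq\<in>F\<times>F. fst pq \<noteq> snd pq}. {y. poly (fst pq - snd pq) y = 0})"
    using assms
  proof (intro finite_UN_I)
    fix pq assume "pq \<in> {pq\<in>F\<times>F. fst pq \<noteq> snd pq}"
    then have "fst pq - snd pq \<noteq> 0" by auto
    then show "finite {y. poly (fst pq - snd pq) y = 0}" by (rule poly_roots_finite)
  qed simp
  ultimately show ?thesis by (rule finite_subset)
qed

lemma interval_min:
  fixes F :: "real poly set"
  assumes fin: "finite F" "F \<noteq> {}" and x0: "x0 \<in> I" "x0 \<notin> crossZ F"
    and nr: "\<And>x y. x \<in> I \<Longrightarrow> (x < y \<and> y < x0) \<or> (x0 < y \<and> y < x) \<Longrightarrow> y \<notin> crossZ F"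
  shows "\<exists>p\<in>F. \<forall>x\<in>I. \<forall>q\<in>F. poly p x \<le> poly q x"
proof -
  have "Min ((\<lambda>q. poly q x0) ` F) \<in> (\<lambda>q. poly q x0) ` F"
    using fin by (intro Min_in) auto
  then obtain p where p: "p \<in> F" "poly p x0 = Min ((\<lambda>q. poly q x0) ` F)"
    by force
  have p0: "poly p x0 \<le> poly q x0" if "q \<in> F" for q
    using p that fin by auto
  have "poly p x \<le> poly q x" if x: "x \<in> I" and q: "q \<in> F" for x q
  proof (rule ccontr)
    assume "\<not> ?thesis"
    then have neg: "poly (q - p) x < 0" by simp
    then have qp: "q \<noteq> p" by auto
    have "poly (q - p) x0 \<noteq> 0" using x0(2) qp p(1) q by (auto simp: crossZ_def)
    then have pos: "poly (q - p) x0 > 0" using p0[OF q] by simp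
    have "x \<noteq> x0" using neg pos by auto
    then consider "x < x0" | "x0 < x" by linarith
    then obtain y where y: "(x < y \<and> y < x0) \<or> (x0 < y \<and> y < x)" "poly (q - p) y = 0"
    proof cases
      case 1
      then show ?thesis using poly_IVT_pos[OF 1 neg pos] that by blast
    next
      case 2
      then show ?thesis using poly_IVT_neg[OF 2 pos neg] that by blast
    qed
    have "y \<in> crossZ F" using y(2) qp p(1) q by (auto simp: crossZ_def)
    then show False using nr[OF x y(1)] by blast
  qed
  then show ?thesis using p(1) by blast
qed

lemma interval_max:
  fixes F :: "real poly set"
  assumes fin: "finite F" "F \<noteq> {}" and x0: "x0 \<in> I" "x0 \<notin> crossZ F"
    and nr: "\<And>x y. x \<in> I \<Longrightarrow> (x < y \<and> y < x0) \<or> (x0 < y \<and> y < x) \<Longrightarrow> y \<notin> crossZ F"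
  shows "\<exists>p\<in>F. \<forall>x\<in>I. \<forall>q\<in>F. poly q x \<le> poly p x"
proof -
  have "Max ((\<lambda>q. poly q x0) ` F) \<in> (\<lambda>q. poly q x0) ` F"
    using fin by (intro Max_in) auto
  then obtain p where p: "p \<in> F" "poly p x0 = Max ((\<lambda>q. poly q x0) ` F)"
    by force
  have p0: "poly q x0 \<le> poly p x0" if "q \<in> F" for q
    using p that fin by auto
  have "poly q x \<le> poly p x" if x: "x \<in> I" and q: "q \<in> F" for x q
  proof (rule ccontr)
    assume "\<not> ?thesis"
    then have neg: "poly (q - p) x > 0" by simp
    then have qp: "q \<noteq> p" by auto
    have "poly (q - p) x0 \<noteq> 0" using x0(2) qp p(1) q by (auto simp: crossZ_def)
    then have pos: "poly (q - p) x0 < 0" using p0[OF q] by simp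
    have "x \<noteq> x0" using neg pos by auto
    then consider "x < x0" | "x0 < x" by linarith
    then obtain y where y: "(x < y \<and> y < x0) \<or> (x0 < y \<and> y < x)" "poly (q - p) y = 0"
    proof cases
      case 1
      then show ?thesis using poly_IVT_neg[OF 1 neg pos] that by blast
    next
      case 2
      then show ?thesis using poly_IVT_pos[OF 2 pos neg] that by blast
    qed
    have "y \<in> crossZ F" using y(2) qp p(1) q by (auto simp: crossZ_def)
    then show False using nr[OF x y(1)] by blast
  qed
  then show ?thesis using p(1) by blast
qed

lemma pieces_good:
  fixes Z :: "real set"
  assumes "finite Z"
  shows "\<exists>ks. sorted_wrt (<) ks \<and> (\<forall>k\<in>set ks. 0 \<le> k) \<and>
     (\<forall>I\<in>pieces ks. I \<subseteq> {0..} \<and> (\<exists>x0\<in>I. x0 \<notin> Z \<and>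
        (\<forall>x y. x \<in> I \<longrightarrow> (x < y \<and> y < x0) \<or> (x0 < y \<and> y < x) \<longrightarrow> y \<notin> Z)))"
proof -
  obtain ks where ks: "sorted_wrt (<) ks" "set ks = Z \<inter> {0<..}"
    using ex1_sorted_list_for_set_if_finite[of "Z \<inter> {0<..}"] assms by auto
  have srt: "sorted ks" using ks(1) strict_sorted_imp_sorted by blast
  have inZ: "y \<in> set ks" if "y \<in> Z" "0 < y" for y using ks(2) that by auto
  have good: "I \<subseteq> {0..} \<and> (\<exists>x0\<in>I. x0 \<notin> Z \<and>
        (\<forall>x y. x \<in> I \<longrightarrow> (x < y \<and> y < x0) \<or> (x0 < y \<and> y < x) \<longrightarrow> y \<notin> Z))" if I: "I \<in> pieces ks" for I
  proof (cases "ks = []")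
    case True
    then have "I = {0..}" using I by (simp add: pieces_def)
    moreover have "y \<notin> Z" if "0 < y" for y using inZ[of y] that True by auto
    ultimately show ?thesis
    proof (intro conjI bexI[of _ 1])
      show "I \<subseteq> {0..}" using \<open>I = {0..}\<close> by simp
      show "(1::real) \<in> I" using \<open>I = {0..}\<close> by simp
      show "(1::real) \<notin> Z" using \<open>\<And>y. 0 < y \<Longrightarrow> y \<notin> Z\<close> by simp
      show "\<forall>x y. x \<in> I \<longrightarrow> x < y \<and> y < 1 \<or> 1 < y \<and> y < x \<longrightarrow> y \<notin> Z"
        using \<open>I = {0..}\<close> \<open>\<And>y. 0 < y \<Longrightarrow> y \<notin> Z\<close> by force
    qed
  next
    case False
    then have Icases: "I = {0..hd ks} \<or> (\<exists>h. Suc h < length ks \<and> I = {ks ! h .. ks ! Suc h}) \<or> I = {last ks..}"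
      using I False unfolding pieces_def by (simp only: if_False Un_iff mem_Collect_eq singleton_iff) blast
    have pos: "0 < k" if "k \<in> set ks" for k using ks(2) that by auto
    from Icases show ?thesis
    proof (elim disjE exE conjE)
      assume I0: "I = {0..hd ks}"
      have h0: "0 < hd ks" using pos False by simp
      have hdle: "hd ks \<le> y" if "y \<in> set ks" for y
        using srt that False by (cases ks) auto
      show ?thesis
      proof (intro conjI bexI[of _ "hd ks / 2"])
        show "I \<subseteq> {0..}" using I0 by auto
        show "hd ks / 2 \<in> I" using I0 h0 by auto
        show "hd ks / 2 \<notin> Z" using inZ[of "hd ks / 2"] hdle[of "hd ks / 2"] h0 by force
        show "\<forall>x y. x \<in> I \<longrightarrow> x < y \<and> y < hd ks / 2 \<or> hd ks / 2 < y \<and> y < x \<longrightarrow> y \<notin> Z"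
        proof (intro allI impI)
          fix x y assume "x \<in> I" "x < y \<and> y < hd ks / 2 \<or> hd ks / 2 < y \<and> y < x"
          then have "0 < y" "y < hd ks" using I0 h0 by auto
          then show "y \<notin> Z" using inZ[of y] hdle[of y] by force
        qed
      qed
    next
      fix h assume h: "Suc h < length ks" and Ih: "I = {ks ! h .. ks ! Suc h}"
      have ab: "ks ! h < ks ! Suc h" using sorted_wrt_nth_less[OF ks(1), of h "Suc h"] h by auto
      have a0: "0 < ks ! h" using pos h by auto
      have notin: "y \<notin> Z" if "ks ! h < y" "y < ks ! Suc h" for y
      proof
        assume "y \<in> Z"
        then have "y \<in> set ks" using inZ a0 that by auto
        then obtain i where i: "i < length ks" "ks ! i = y" unfolding in_set_conv_nth by blast
        show False
        proof (cases "i \<le> h")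
          case True
          then have "ks ! i \<le> ks ! h" using sorted_nth_mono[OF srt True] h by auto
          then show False using i that by auto
        next
          case False
          then have "ks ! Suc h \<le> ks ! i" using sorted_nth_mono[OF srt, of "Suc h" i] i by auto
          then show False using i that by auto
        qed
      qed
      let ?m = "(ks ! h + ks ! Suc h) / 2"
      show ?thesis
      proof (intro conjI bexI[of _ ?m])
        show "I \<subseteq> {0..}" using Ih a0 by auto
        show "?m \<in> I" using Ih ab by auto
        show "?m \<notin> Z" using notin ab by auto
        show "\<forall>x y. x \<in> I \<longrightarrow> x < y \<and> y < ?m \<or> ?m < y \<and> y < x \<longrightarrow> y \<notin> Z"
        proof (intro allI impI)
          fix x y assume "x \<in> I" "x < y \<and> y < ?m \<or> ?m < y \<and> y < x"
          then have "ks ! h < y" "y < ks ! Suc h" using Ih ab by auto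
          then show "y \<notin> Z" using notin by blast
        qed
      qed
    next
      assume Il: "I = {last ks..}"
      have l0: "0 < last ks" using pos False by simp
      have lastge: "y \<le> last ks" if "y \<in> set ks" for y
      proof -
        have "\<exists>i<length ks. ks ! i = y" using that by (simp add: in_set_conv_nth)
        then obtain i where i: "i < length ks" "ks ! i = y" by blast
        have "i \<le> length ks - 1" "length ks - 1 < length ks" using i(1) False by auto
        then have "ks ! i \<le> ks ! (length ks - 1)" by (rule sorted_nth_mono[OF srt])
        then show ?thesis using last_conv_nth[OF False] i(2) by simp
      qed
      have notin: "y \<notin> Z" if "last ks < y" for y
      proof
        assume "y \<in> Z"
        moreover have "0 < y" using l0 that by linarith
        ultimately have "y \<le> last ks" using inZ lastge by blast
        then show False using that by linarith
      qed
      show ?thesis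
      proof (intro conjI bexI[of _ "last ks + 1"])
        show "I \<subseteq> {0..}" using Il l0 by auto
        show "last ks + 1 \<in> I" using Il by auto
        show "last ks + 1 \<notin> Z" using notin by auto
        show "\<forall>x y. x \<in> I \<longrightarrow> x < y \<and> y < last ks + 1 \<or> last ks + 1 < y \<and> y < x \<longrightarrow> y \<notin> Z"
        proof (intro allI impI)
          fix x y assume "x \<in> I" "x < y \<and> y < last ks + 1 \<or> last ks + 1 < y \<and> y < x"
          then have "last ks < y" using Il by auto
          then show "y \<notin> Z" using notin by blast
        qed
      qed
    qed
  qed
  have "\<forall>k\<in>set ks. 0 \<le> k" using ks(2) by auto
  then show ?thesis using ks(1) good by blast
qed

lemma pp_min:
  fixes F :: "real poly set"
  assumes fin: "finite F" "F \<noteq> {}" and g: "\<And>x. 0 \<le> x \<Longrightarrow> g x = Min ((\<lambda>q. poly q x) ` F)"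
  shows "piecewise_polynomial g"
proof -
  obtain ks where ks: "sorted_wrt (<) ks" "\<forall>k\<in>set ks. 0 \<le> k"
    "\<forall>I\<in>pieces ks. I \<subseteq> {0..} \<and> (\<exists>x0\<in>I. x0 \<notin> crossZ F \<and>
        (\<forall>x y. x \<in> I \<longrightarrow> (x < y \<and> y < x0) \<or> (x0 < y \<and> y < x) \<longrightarrow> y \<notin> crossZ F))"
    using pieces_good[OF finite_crossZ[OF fin(1)]] by blast
  have "\<exists>q. \<forall>\<kappa>\<in>I. g \<kappa> = poly q \<kappa>" if I: "I \<in> pieces ks" for I
  proof -
    obtain x0 where x0: "x0 \<in> I" "x0 \<notin> crossZ F"
      "\<And>x y. x \<in> I \<Longrightarrow> (x < y \<and> y < x0) \<or> (x0 < y \<and> y < x) \<Longrightarrow> y \<notin> crossZ F"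
      using ks(3) I by blast
    have "\<exists>p\<in>F. \<forall>x\<in>I. \<forall>q\<in>F. poly p x \<le> poly q x"
      by (rule interval_min[OF fin x0(1,2)], rule x0(3))
    then obtain p where p: "p \<in> F" "\<forall>x\<in>I. \<forall>q\<in>F. poly p x \<le> poly q x" by blast
    have "g \<kappa> = poly p \<kappa>" if "\<kappa> \<in> I" for \<kappa>
    proof -
      have "0 \<le> \<kappa>" using ks(3) I that by auto
      then have "g \<kappa> = Min ((\<lambda>q. poly q \<kappa>) ` F)" by (rule g)
      also have "\<dots> = poly p \<kappa>"
        using p that fin by (intro Min_eqI) auto
      finally show ?thesis .
    qed
    then show ?thesis by blast
  qed
  then show ?thesis unfolding piecewise_polynomial_def using ks(1,2) by blast
qed

lemma pp_max:
  fixes F :: "real poly set"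
  assumes fin: "finite F" "F \<noteq> {}" and g: "\<And>x. 0 \<le> x \<Longrightarrow> g x = Max ((\<lambda>q. poly q x) ` F)"
  shows "piecewise_polynomial g"
proof -
  obtain ks where ks: "sorted_wrt (<) ks" "\<forall>k\<in>set ks. 0 \<le> k"
    "\<forall>I\<in>pieces ks. I \<subseteq> {0..} \<and> (\<exists>x0\<in>I. x0 \<notin> crossZ F \<and>
        (\<forall>x y. x \<in> I \<longrightarrow> (x < y \<and> y < x0) \<or> (x0 < y \<and> y < x) \<longrightarrow> y \<notin> crossZ F))"
    using pieces_good[OF finite_crossZ[OF fin(1)]] by blast
  have "\<exists>q. \<forall>\<kappa>\<in>I. g \<kappa> = poly q \<kappa>" if I: "I \<in> pieces ks" for I
  proof -
    obtain x0 where x0: "x0 \<in> I" "x0 \<notin> crossZ F"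
      "\<And>x y. x \<in> I \<Longrightarrow> (x < y \<and> y < x0) \<or> (x0 < y \<and> y < x) \<Longrightarrow> y \<notin> crossZ F"
      using ks(3) I by blast
    have "\<exists>p\<in>F. \<forall>x\<in>I. \<forall>q\<in>F. poly q x \<le> poly p x"
      by (rule interval_max[OF fin x0(1,2)], rule x0(3))
    then obtain p where p: "p \<in> F" "\<forall>x\<in>I. \<forall>q\<in>F. poly q x \<le> poly p x" by blast
    have "g \<kappa> = poly p \<kappa>" if "\<kappa> \<in> I" for \<kappa>
    proof -
      have "0 \<le> \<kappa>" using ks(3) I that by auto
      then have "g \<kappa> = Max ((\<lambda>q. poly q \<kappa>) ` F)" by (rule g)
      also have "\<dots> = poly p \<kappa>"
        using p that fin by (intro Max_eqI) auto
      finally show ?thesis .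
    qed
    then show ?thesis by blast
  qed
  then show ?thesis unfolding piecewise_polynomial_def using ks(1,2) by blast
qed



theorem proposition1:
  fixes B :: "int^'m::finite^'n::finite" and C :: "int^'n^'m"
    and J2 J4 :: "real^'n^'n" and lo hi :: "'m \<Rightarrow> real"
  assumes "transpose J2 = J2" and "transpose J4 = J4"
    and "\<And>j. 0 \<le> lo j" and "\<And>j. lo j \<le> hi j"
  shows "(\<forall>\<kappa>\<ge>0. Psi_minus B C J2 J4 lo hi \<kappa>
                  = Min ((\<lambda>d. charfun B C J2 J4 d \<kappa>) ` vertices_D lo hi)
              \<and> Psi_plus B C J2 J4 lo hi \<kappa>
                  = Max ((\<lambda>d. charfun B C J2 J4 d \<kappa>) ` vertices_D lo hi))
         \<and> piecewise_polynomial (Psi_minus B C J2 J4 lo hi)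
         \<and> piecewise_polynomial (Psi_plus B C J2 J4 lo hi)"
proof -
  let ?V = "vertices_D lo hi"
  let ?f = "\<lambda>\<kappa> d. charfun B C J2 J4 d \<kappa>"
  have finV: "finite ?V" by (rule finite_vertices)
  have neV: "?V \<noteq> {}" using lo_vertex by blast
  have sub: "?V \<subseteq> box_D lo hi" by (rule vertices_sub) (rule assms(4))
  have part1: "Psi_minus B C J2 J4 lo hi \<kappa> = Min (?f \<kappa> ` ?V)
     \<and> Psi_plus B C J2 J4 lo hi \<kappa> = Max (?f \<kappa> ` ?V)" for \<kappa>
  proof
    have aff: "\<And>d j. \<exists>a b. \<forall>t. ?f \<kappa> (d(j:=t)) = a + t * b"
      by (rule charfun_affine)
    have "Inf (?f \<kappa> ` box_D lo hi) = Min (?f \<kappa> ` ?V)"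
    proof (rule cInf_eq_minimum)
      show "Min (?f \<kappa> ` ?V) \<in> ?f \<kappa> ` box_D lo hi"
        using Min_in[of "?f \<kappa> ` ?V"] finV neV sub by blast
      fix x assume "x \<in> ?f \<kappa> ` box_D lo hi"
      then obtain d where d: "d \<in> box_D lo hi" "x = ?f \<kappa> d" by blast
      obtain v where v: "v \<in> ?V" "?f \<kappa> v \<le> ?f \<kappa> d"
        using vertex_min[of "?f \<kappa>", OF aff assms(4) d(1)] by blast
      have "Min (?f \<kappa> ` ?V) \<le> ?f \<kappa> v" using finV v(1) by simp
      then show "Min (?f \<kappa> ` ?V) \<le> x" using v(2) d(2) by linarith
    qed
    then show "Psi_minus B C J2 J4 lo hi \<kappa> = Min (?f \<kappa> ` ?V)"
      by (simp add: Psi_minus_def)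
    have "Sup (?f \<kappa> ` box_D lo hi) = Max (?f \<kappa> ` ?V)"
    proof (rule cSup_eq_maximum)
      show "Max (?f \<kappa> ` ?V) \<in> ?f \<kappa> ` box_D lo hi"
        using Max_in[of "?f \<kappa> ` ?V"] finV neV sub by blast
      fix x assume "x \<in> ?f \<kappa> ` box_D lo hi"
      then obtain d where d: "d \<in> box_D lo hi" "x = ?f \<kappa> d" by blast
      obtain v where v: "v \<in> ?V" "?f \<kappa> d \<le> ?f \<kappa> v"
        using vertex_max[of "?f \<kappa>", OF aff assms(4) d(1)] by blast
      have "?f \<kappa> v \<le> Max (?f \<kappa> ` ?V)" using finV v(1) by simp
      then show "x \<le> Max (?f \<kappa> ` ?V)" using v(2) d(2) by linarith
    qed
    then show "Psi_plus B C J2 J4 lo hi \<kappa> = Max (?f \<kappa> ` ?V)"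
      by (simp add: Psi_plus_def)
  qed
  obtain Q where Q: "\<And>d \<kappa>. charfun B C J2 J4 d \<kappa> = poly (Q d) \<kappa>"
    using charfun_poly[of B C J2 J4] by metis
  define F where "F = Q ` ?V"
  have finF: "finite F" and neF: "F \<noteq> {}" using finV neV by (auto simp: F_def)
  have img: "?f \<kappa> ` ?V = (\<lambda>q. poly q \<kappa>) ` F" for \<kappa>
    by (simp add: F_def image_image Q)
  have pm: "piecewise_polynomial (Psi_minus B C J2 J4 lo hi)"
    by (rule pp_min[OF finF neF]) (simp add: part1 img)
  have pp: "piecewise_polynomial (Psi_plus B C J2 J4 lo hi)"
    by (rule pp_max[OF finF neF]) (simp add: part1 img)
  show ?thesis using part1 pm pp by blast
qed

end
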